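(* For $n\ge1$ and $0\le m\le n-1$ let $Z_n(m)$ be the number of $(\underline{i},\underline{k})\in\mathfrak{T}_n$ of weight $m$. Then: (1) $Z_n(m)=\sum_{j=n-m-1}^{n-1}Z_j(m-n+j+1)\,Z_{n-j}(n-j-1)$ for all $0\le m\le n-2$; (2) $Z_n(n-1)=C_{n-1}$; (3) $\sum_{m=0}^{n-1}2^{n-m}Z_n(m)=(n+1)C_n$, where $C_n=\frac1{n+1}\binom{2n}{n}$ is the $n$-th Catalan number.
   Context: $\mathfrak{T}_n$ is the set of pairs $(\underline{i},\underline{k})$ of $p$-tuples of non-negative integers $\underline{i}=(i_1,\dots,i_p)$, $\underline{k}=(k_1,\dots,k_p)$, $0\le p\le n-1$, with $1\le i_1<\dots<i_p\le n-1$ and $1\le i_1-k_1<\dots<i_p-k_p\le n-1$ (the empty pair, $p=0$, is included). The weight of $(\underline{i},\underline{k})$ is $|\bigcup_{j=1}^p\{i_j-k_j,i_j-k_j+1,\dots,i_j\}|$. It is known (Jones) that $|\mathfrak{T}_n|=\sum_{m=0}^{n-1}Z_n(m)=C_n$. *)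

theory Defs
  imports Main
begin

text \<open>An element of T_n is a pair (is, ks) of p-tuples (lists of length p) of
  non-negative integers with 0 <= p <= n-1, 1 <= i_1 < ... < i_p <= n-1 and
  1 <= i_1 - k_1 < ... < i_p - k_p <= n-1 (subtraction is that of integers;
  on nat, 1 <= i - k forces k < i, so no truncation occurs).\<close>
definition Tset :: "nat \<Rightarrow> (nat list \<times> nat list) set" where
  "Tset n = {(is, ks). length is = length ks \<and> length is \<le> n - 1
     \<and> sorted_wrt (<) is
     \<and> sorted_wrt (<) (map (\<lambda>j. is ! j - ks ! j) [0..<length is])
     \<and> (\<forall>j < length is. 1 \<le> is ! j \<and> is ! j \<le> n - 1
            \<and> 1 \<le> is ! j - ks ! j \<and> is ! j - ks ! j \<le> n - 1)}"

definition weight :: "nat list \<times> nat list \<Rightarrow> nat" where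
  "weight t = card (\<Union>j < length (fst t). {fst t ! j - snd t ! j .. fst t ! j})"

definition Z :: "nat \<Rightarrow> nat \<Rightarrow> nat" where
  "Z n m = card {t \<in> Tset n. weight t = m}"

definition catalan :: "nat \<Rightarrow> nat" where
  "catalan n = (2 * n choose n) div (n + 1)"

end

theory Submission
  imports Defs
begin


definition lt2 :: "nat \<times> nat \<Rightarrow> nat \<times> nat \<Rightarrow> bool" where
  "lt2 a b \<longleftrightarrow> fst a < fst b \<and> snd a < snd b"

definition P :: "nat \<Rightarrow> (nat \<times> nat) list set" where
  "P n = {ps. sorted_wrt lt2 ps \<and> (\<forall>p\<in>set ps. 1 \<le> snd p \<and> snd p \<le> fst p \<and> fst p \<le> n - 1)}"

definition U :: "(nat \<times> nat) list \<Rightarrow> nat set" where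
  "U ps = (\<Union>p\<in>set ps. {snd p..fst p})"

definition wt :: "(nat \<times> nat) list \<Rightarrow> nat" where
  "wt ps = card (U ps)"

definition Zp :: "nat \<Rightarrow> nat \<Rightarrow> nat" where
  "Zp n m = card {ps \<in> P n. wt ps = m}"

definition cf :: "nat list \<times> nat list \<Rightarrow> (nat \<times> nat) list" where
  "cf t = map (\<lambda>x. (fst t ! x, fst t ! x - snd t ! x)) [0..<length (fst t)]"

definition cg :: "(nat \<times> nat) list \<Rightarrow> nat list \<times> nat list" where
  "cg ps = (map fst ps, map (\<lambda>p. fst p - snd p) ps)"

lemma cf_in: assumes "t \<in> Tset n" shows "cf t \<in> P n"
proof -
  obtain xs ks where t: "t = (xs, ks)" by (cases t)
  from assms[unfolded t Tset_def] have
    L: "length xs = length ks" and s1: "sorted_wrt (<) xs"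
    and s2: "sorted_wrt (<) (map (\<lambda>j. xs ! j - ks ! j) [0..<length xs])"
    and c: "\<forall>j < length xs. 1 \<le> xs ! j \<and> xs ! j \<le> n - 1
            \<and> 1 \<le> xs ! j - ks ! j \<and> xs ! j - ks ! j \<le> n - 1" by auto
  have "sorted_wrt lt2 (cf t)"
    using s1 s2 unfolding sorted_wrt_iff_nth_less cf_def t lt2_def by auto
  moreover have "\<forall>p\<in>set (cf t). 1 \<le> snd p \<and> snd p \<le> fst p \<and> fst p \<le> n - 1"
    using c unfolding cf_def t by auto
  ultimately show ?thesis unfolding P_def by auto
qed

lemma P_len: assumes "ps \<in> P n" shows "length ps \<le> n - 1"
proof -
  from assms have s: "sorted_wrt lt2 ps" and c: "\<forall>p\<in>set ps. 1 \<le> snd p \<and> snd p \<le> fst p \<and> fst p \<le> n - 1"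
    unfolding P_def by auto
  have "sorted_wrt (<) (map fst ps)" using s unfolding sorted_wrt_map
    by (rule sorted_wrt_mono_rel[rotated]) (auto simp: lt2_def)
  hence d: "distinct (map fst ps)" by (metis strict_sorted_iff sorted_wrt_map)
  have "set (map fst ps) \<subseteq> {1..n-1}" using c by auto
  hence "card (set (map fst ps)) \<le> n - 1" using card_mono[of "{1..n-1}"] by fastforce
  thus ?thesis using distinct_card[OF d] by simp
qed

lemma cg_in: assumes "ps \<in> P n" shows "cg ps \<in> Tset n"
proof -
  from assms have s: "sorted_wrt lt2 ps" and c: "\<forall>p\<in>set ps. 1 \<le> snd p \<and> snd p \<le> fst p \<and> fst p \<le> n - 1"
    unfolding P_def by auto
  have cc: "\<And>j. j < length ps \<Longrightarrow> 1 \<le> snd (ps!j) \<and> snd (ps!j) \<le> fst (ps!j) \<and> fst (ps!j) \<le> n - 1"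
    using c nth_mem by blast
  define xs where "xs = map fst ps"
  define ks where "ks = map (\<lambda>p. fst p - snd p) ps"
  have e: "map (\<lambda>j. xs ! j - ks ! j) [0..<length xs] = map snd ps"
    unfolding xs_def ks_def by (rule nth_equalityI) (auto dest: cc)
  have "length xs = length ks" "length xs \<le> n - 1" unfolding xs_def ks_def using P_len[OF assms] by auto
  moreover have "sorted_wrt (<) xs" using s unfolding xs_def by (auto simp: sorted_wrt_iff_nth_less lt2_def)
  moreover have "sorted_wrt (<) (map (\<lambda>j. xs ! j - ks ! j) [0..<length xs])" unfolding e
    using s by (auto simp: sorted_wrt_iff_nth_less lt2_def)
  moreover have "\<forall>j < length xs. 1 \<le> xs ! j \<and> xs ! j \<le> n - 1
            \<and> 1 \<le> xs ! j - ks ! j \<and> xs ! j - ks ! j \<le> n - 1"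
    using cc unfolding xs_def ks_def by fastforce
  ultimately show ?thesis unfolding Tset_def cg_def xs_def ks_def by auto
qed

lemma cg_cf: assumes "t \<in> Tset n" shows "cg (cf t) = t"
proof -
  obtain xs ks where t: "t = (xs, ks)" by (cases t)
  from assms[unfolded t Tset_def] have
    L: "length xs = length ks" 
    and c: "\<forall>j < length xs. 1 \<le> xs ! j - ks ! j" by auto
  show ?thesis unfolding t cg_def cf_def
    apply auto
    apply (rule nth_equalityI, auto)
    apply (rule nth_equalityI) using L c apply auto
    done
qed

lemma cf_cg: assumes "ps \<in> P n" shows "cf (cg ps) = ps"
proof -
  from assms have c: "\<forall>p\<in>set ps. 1 \<le> snd p \<and> snd p \<le> fst p \<and> fst p \<le> n - 1"
    unfolding P_def by auto
  have cc: "\<And>j. j < length ps \<Longrightarrow> snd (ps!j) \<le> fst (ps!j)"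
    using c nth_mem by blast
  show ?thesis unfolding cf_def cg_def
    by (rule nth_equalityI) (auto dest: cc simp: prod_eq_iff)
qed

lemma weight_cf: "weight t = wt (cf t)"
proof -
  have "set (cf t) = (\<lambda>x. (fst t ! x, fst t ! x - snd t ! x)) ` {..<length (fst t)}"
    unfolding cf_def by auto
  thus ?thesis unfolding weight_def wt_def U_def by simp
qed

lemma bij_cf: "bij_betw cf (Tset n) (P n)"
  by (rule bij_betw_byWitness[where f'=cg]) (auto simp: cg_cf cf_cg cf_in cg_in)

lemma Z_Zp: "Z n m = Zp n m"
proof -
  have "bij_betw cf {t \<in> Tset n. weight t = m} {ps \<in> P n. wt ps = m}"
    by (rule bij_betw_byWitness[where f'=cg]) (auto simp: cg_cf cf_cg cf_in cg_in weight_cf)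
  thus ?thesis unfolding Z_def Zp_def by (rule bij_betw_same_card)
qed




lemma P_memD: assumes "ps \<in> P n"
  shows "sorted_wrt lt2 ps" "\<And>p. p \<in> set ps \<Longrightarrow> 1 \<le> snd p \<and> snd p \<le> fst p \<and> fst p \<le> n - 1"
  using assms unfolding P_def by auto

lemma P_intro: assumes "sorted_wrt lt2 ps"
  "\<And>t. t < length ps \<Longrightarrow> 1 \<le> snd (ps!t) \<and> snd (ps!t) \<le> fst (ps!t) \<and> fst (ps!t) \<le> n - 1"
  shows "ps \<in> P n"
proof -
  have "\<forall>p\<in>set ps. 1 \<le> snd p \<and> snd p \<le> fst p \<and> fst p \<le> n - 1"
  proof
    fix p assume "p \<in> set ps"
    then obtain t where "t < length ps" "p = ps!t" by (auto simp: in_set_conv_nth)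
    thus "1 \<le> snd p \<and> snd p \<le> fst p \<and> fst p \<le> n - 1" using assms(2) by blast
  qed
  thus ?thesis unfolding P_def using assms(1) by simp
qed

lemma P_nth: assumes "ps \<in> P n" "t < length ps"
  shows "1 \<le> snd (ps!t)" "snd (ps!t) \<le> fst (ps!t)" "fst (ps!t) \<le> n - 1"
  using P_memD(2)[OF assms(1) nth_mem[OF assms(2)]] by auto

lemma P_sorted: assumes "ps \<in> P n" "a < b" "b < length ps"
  shows "fst (ps!a) < fst (ps!b)" "snd (ps!a) < snd (ps!b)"
  using P_memD(1)[OF assms(1)] assms(2,3) unfolding sorted_wrt_iff_nth_less lt2_def by auto

lemma P_sorted_le: assumes "ps \<in> P n" "a \<le> b" "b < length ps"
  shows "fst (ps!a) \<le> fst (ps!b)" "snd (ps!a) \<le> snd (ps!b)"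
  using P_sorted[OF assms(1) _ assms(3), of a] assms(2) by (cases "a = b"; force)+

lemma finite_P: "finite (P n)"
proof -
  have "P n \<subseteq> {xs. set xs \<subseteq> {0..n} \<times> {0..n} \<and> length xs \<le> n - 1}"
    using P_len P_memD(2) by fastforce
  thus ?thesis using finite_lists_length_le[of "{0..n} \<times> {0..n}"] finite_subset by blast
qed

lemma finite_U: "finite (U ps)" unfolding U_def by auto

lemma U_sub: assumes "ps \<in> P n" shows "U ps \<subseteq> {1..n-1}"
  using P_memD(2)[OF assms] unfolding U_def by fastforce

lemma wt_le: assumes "ps \<in> P n" shows "wt ps \<le> n - 1"
  unfolding wt_def using card_mono[OF _ U_sub[OF assms]] by simp

lemma P0: "P 0 = {[]}"
proof -
  have "ps = []" if "ps \<in> P 0" for ps using P_len[OF that] by simp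
  moreover have "[] \<in> P 0" unfolding P_def by simp
  ultimately show ?thesis by blast
qed

lemma wt_Nil: "wt [] = 0" unfolding wt_def U_def by simp

lemma Zp0: "Zp 0 m = (if m = 0 then 1 else 0)"
proof -
  have "{ps \<in> P 0. wt ps = m} = (if m = 0 then {[]} else {})" unfolding P0 by (auto simp: wt_Nil)
  thus ?thesis unfolding Zp_def by simp
qed

lemma Zp_big: assumes "n \<ge> 1" "m \<ge> n" shows "Zp n m = 0"
proof -
  have e: "{ps \<in> P n. wt ps = m} = {}" using wt_le assms by fastforce
  show ?thesis unfolding Zp_def e by simp
qed

lemma card_P_sum: "card (P k) = (\<Sum>m = 0..k. Zp k m)"
proof -
  have e: "P k = (\<Union>m\<in>{0..k}. {ps \<in> P k. wt ps = m})"
    using wt_le by fastforce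
  have "card (\<Union>m\<in>{0..k}. {ps \<in> P k. wt ps = m}) = (\<Sum>m = 0..k. Zp k m)"
    unfolding Zp_def by (rule card_UN_disjoint) (auto intro: finite_subset[OF _ finite_P])
  thus ?thesis using e by simp
qed

lemma cover: assumes "\<forall>t. t + 1 < length ps \<longrightarrow> snd (ps!(t+1)) \<le> fst (ps!t) + 1"
  "snd (ps!0) \<le> 1" 
  shows "t < length ps \<Longrightarrow> {1..fst (ps!t)} \<subseteq> U ps"
proof (induction t)
  case 0
  then have "ps!0 \<in> set ps" by simp
  thus ?case using assms(2) unfolding U_def by force
next
  case (Suc t)
  have "ps!(Suc t) \<in> set ps" using Suc by simp
  hence "{snd (ps!Suc t)..fst (ps!Suc t)} \<subseteq> U ps" unfolding U_def by blast
  moreover have "{1..fst (ps!t)} \<subseteq> U ps" using Suc by simp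
  moreover have "snd (ps!Suc t) \<le> fst (ps!t) + 1" using assms(1) Suc by auto
  ultimately show ?case
  proof (intro subsetI)
    fix x assume h: "{snd (ps!Suc t)..fst (ps!Suc t)} \<subseteq> U ps" "{1..fst (ps!t)} \<subseteq> U ps"
      "snd (ps!Suc t) \<le> fst (ps!t) + 1" "x \<in> {1..fst (ps!Suc t)}"
    show "x \<in> U ps"
    proof (cases "x \<le> fst (ps!t)")
      case True thus ?thesis using h(2,4) by auto
    next
      case False thus ?thesis using h(1,3,4) by auto
    qed
  qed
qed

lemma U_nth: "x \<in> U ps \<longleftrightarrow> (\<exists>t<length ps. snd (ps!t) \<le> x \<and> x \<le> fst (ps!t))"
proof -
  have "x \<in> U ps \<longleftrightarrow> (\<exists>p\<in>set ps. snd p \<le> x \<and> x \<le> fst p)" by (auto simp: U_def)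
  also have "\<dots> \<longleftrightarrow> (\<exists>t<length ps. snd (ps!t) \<le> x \<and> x \<le> fst (ps!t))" 
  proof
    assume "\<exists>p\<in>set ps. snd p \<le> x \<and> x \<le> fst p"
    then obtain p where "p \<in> set ps" "snd p \<le> x \<and> x \<le> fst p" by blast
    thus "\<exists>t<length ps. snd (ps!t) \<le> x \<and> x \<le> fst (ps!t)" by (auto simp: in_set_conv_nth)
  next
    assume "\<exists>t<length ps. snd (ps!t) \<le> x \<and> x \<le> fst (ps!t)"
    thus "\<exists>p\<in>set ps. snd p \<le> x \<and> x \<le> fst p" using nth_mem by blast
  qed
  finally show ?thesis .
qed

lemma full_props: assumes "ps \<in> P n" "wt ps = n - 1" "n \<ge> 2"
  shows "ps \<noteq> []" "snd (ps!0) = 1" "fst (ps!(length ps - 1)) = n - 1"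
    "\<And>t. t + 1 < length ps \<Longrightarrow> snd (ps!(t+1)) \<le> fst (ps!t) + 1"
proof -
  have UU: "U ps = {1..n-1}"
    using card_subset_eq[OF _ U_sub[OF assms(1)]] assms(2) unfolding wt_def by simp
  show ne: "ps \<noteq> []" using UU assms(3) unfolding U_def by auto
  have "1 \<in> U ps" using UU assms(3) by simp
  then obtain t where t: "t < length ps" "snd (ps!t) \<le> 1" unfolding U_nth by auto
  have "snd (ps!0) \<le> snd (ps!t)" using P_sorted_le[OF assms(1) _ t(1)] by simp
  thus "snd (ps!0) = 1" using t P_nth(1)[OF assms(1), of 0] ne by simp
  have "n - 1 \<in> U ps" using UU assms(3) by simp
  then obtain t where t: "t < length ps" "n - 1 \<le> fst (ps!t)" unfolding U_nth by auto
  have "fst (ps!t) \<le> fst (ps!(length ps - 1))" using P_sorted_le[OF assms(1), of t "length ps - 1"] t ne by simp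
  thus "fst (ps!(length ps - 1)) = n - 1" using t P_nth(3)[OF assms(1), of "length ps - 1"] ne by simp
  fix t assume tl: "t + 1 < length ps"
  have lt: "fst (ps!t) < fst (ps!(t+1))" using P_sorted[OF assms(1), of t "t+1"] tl by simp
  have "fst (ps!(t+1)) \<le> n - 1" using P_nth[OF assms(1) tl] by simp
  hence "fst (ps!t) + 1 \<in> U ps" using UU lt by simp
  then obtain s where s: "s < length ps" "snd (ps!s) \<le> fst (ps!t) + 1" "fst (ps!t) + 1 \<le> fst (ps!s)"
    unfolding U_nth by auto
  have "t < s"
  proof (rule ccontr)
    assume "\<not> t < s"
    hence "fst (ps!s) \<le> fst (ps!t)" using P_sorted_le[OF assms(1), of s t] tl by simp
    thus False using s by simp
  qed
  hence "snd (ps!(t+1)) \<le> snd (ps!s)" using P_sorted_le[OF assms(1), of "t+1" s] s by simp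
  thus "snd (ps!(t+1)) \<le> fst (ps!t) + 1" using s by simp
qed

definition fw :: "nat \<Rightarrow> (nat \<times> nat) list \<Rightarrow> (nat \<times> nat) list" where
  "fw n ps = map (\<lambda>t. (if t < length ps then fst (ps!t) else n - 1,
                        if t = 0 then 1 else Suc (snd (ps!(t-1))))) [0..<Suc (length ps)]"

definition bw :: "(nat \<times> nat) list \<Rightarrow> (nat \<times> nat) list" where
  "bw ps = map (\<lambda>t. (fst (ps!t), snd (ps!(t+1)) - 1)) [0..<length ps - 1]"

lemma fw_in: assumes "ps \<in> P (n-1)" "n \<ge> 2" shows "fw n ps \<in> P n" "wt (fw n ps) = n - 1"
proof -
  let ?q = "fw n ps"
  have len: "length ?q = Suc (length ps)" unfolding fw_def by simp
  have nth: "\<And>t. t < Suc (length ps) \<Longrightarrow> ?q!t = (if t < length ps then fst (ps!t) else n - 1,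
                        if t = 0 then 1 else Suc (snd (ps!(t-1))))"
    unfolding fw_def by (simp del: upt_Suc)
  have b1: "\<And>t. t < length ps \<Longrightarrow> fst (ps!t) \<le> n - 2" using P_nth(3)[OF assms(1)] by (simp add: diff_diff_left numeral_2_eq_2)
  have srt: "sorted_wrt lt2 ?q"
    unfolding sorted_wrt_iff_nth_less len
  proof (intro allI impI)
    fix a b assume ab: "a < b" "b < Suc (length ps)"
    show "lt2 (?q!a) (?q!b)"
    proof -
      have a: "a < Suc (length ps)" using ab by simp
      have f: "(if a < length ps then fst (ps!a) else n - 1) < (if b < length ps then fst (ps!b) else n - 1)"
      proof (cases "b < length ps")
        case True thus ?thesis using P_sorted[OF assms(1), of a b] ab by simp
      next
        case False thus ?thesis using b1[of a] ab assms(2) by simp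
      qed
      have s: "(if a = 0 then 1 else Suc (snd (ps!(a-1)))) < (if b = 0 then 1 else Suc (snd (ps!(b-1))))"
      proof (cases "a = 0")
        case True
        have "b - 1 < length ps" "b > 0" using ab True by auto
        thus ?thesis using True P_nth(1)[OF assms(1), of "b-1"] by simp
      next
        case False thus ?thesis using P_sorted(2)[OF assms(1), of "a-1" "b-1"] ab by simp
      qed
      show ?thesis unfolding nth[OF ab(2)] nth[OF a] lt2_def using f s by simp
    qed
  qed
  have bnd: "1 \<le> snd (?q!t) \<and> snd (?q!t) \<le> fst (?q!t) \<and> fst (?q!t) \<le> n - 1" if t: "t < Suc (length ps)" for t
  proof (cases "t = 0")
    case True
    then show ?thesis unfolding nth[OF t] using P_nth[OF assms(1), of 0] assms(2) b1[of 0] by auto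
  next
    case False
    have "snd (ps!(t-1)) \<le> fst (ps!(t-1))" "fst (ps!(t-1)) \<le> n - 2"
      using P_nth[OF assms(1), of "t-1"] b1[of "t-1"] t False by auto
    moreover have "t < length ps \<Longrightarrow> fst (ps!(t-1)) < fst (ps!t)" using P_sorted[OF assms(1), of "t-1" t] False by simp
    moreover have "fst (ps!t) \<le> n - 1" if "t < length ps" using P_nth[OF assms(1) that] by simp
    ultimately show ?thesis unfolding nth[OF t] using False assms(2) by auto
  qed
  show inP: "?q \<in> P n" apply (rule P_intro[OF srt]) using bnd len by auto
  have "{1..fst (?q!length ps)} \<subseteq> U ?q"
    apply (rule cover)
    using nth len by (auto simp: P_nth[OF assms(1)])
  hence "{1..n-1} \<subseteq> U ?q" using nth[of "length ps"] by simp
  hence "U ?q = {1..n-1}" using U_sub[OF inP] by auto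
  thus "wt ?q = n - 1" unfolding wt_def by simp
qed

lemma bw_in: assumes "ps \<in> P n" "wt ps = n - 1" "n \<ge> 2" shows "bw ps \<in> P (n-1)"
proof -
  note F = full_props[OF assms]
  have len: "length (bw ps) = length ps - 1" unfolding bw_def by simp
  have nth: "\<And>t. t < length ps - 1 \<Longrightarrow> bw ps!t = (fst (ps!t), snd (ps!(t+1)) - 1)"
    unfolding bw_def by simp
  have srt: "sorted_wrt lt2 (bw ps)"
    unfolding sorted_wrt_iff_nth_less len
  proof (intro allI impI)
    fix a b assume ab: "a < b" "b < length ps - 1"
    show "lt2 (bw ps!a) (bw ps!b)"
    proof -
      have "fst (ps!a) < fst (ps!b)" using P_sorted[OF assms(1), of a b] ab by simp
      moreover have "snd (ps!(a+1)) < snd (ps!(b+1))" using P_sorted[OF assms(1), of "a+1" "b+1"] ab by simp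
      moreover have "1 \<le> snd (ps!(a+1))" using P_nth[OF assms(1), of "a+1"] ab by simp
      moreover have a: "a < length ps - 1" using ab by simp
      ultimately show ?thesis unfolding nth[OF ab(2)] nth[OF a] lt2_def by auto
    qed
  qed
  have bnd: "1 \<le> snd (bw ps!t) \<and> snd (bw ps!t) \<le> fst (bw ps!t) \<and> fst (bw ps!t) \<le> n - 1 - 1" if t: "t < length ps - 1" for t
  proof -
    have "snd (ps!0) < snd (ps!(t+1))" using P_sorted[OF assms(1), of 0 "t+1"] t by simp
    moreover have "fst (ps!t) < fst (ps!(length ps - 1))" using P_sorted[OF assms(1), of t "length ps - 1"] t by simp
    moreover have "snd (ps!(t+1)) \<le> fst (ps!t) + 1" using F(4)[of t] t by simp
    ultimately show ?thesis unfolding nth[OF t] using F(2,3) t by auto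
  qed
  show ?thesis apply (rule P_intro[OF srt]) using bnd len by auto
qed

lemma bw_fw: assumes "ps \<in> P (n-1)" shows "bw (fw n ps) = ps"
proof (rule nth_equalityI)
  show "length (bw (fw n ps)) = length ps" by (simp add: bw_def fw_def)
  fix i assume "i < length (bw (fw n ps))"
  hence i: "i < length ps" by (simp add: bw_def fw_def)
  show "bw (fw n ps) ! i = ps ! i" using i unfolding bw_def fw_def
    by (simp del: upt_Suc add: nth_append)
qed

lemma fw_bw: assumes "ps \<in> P n" "wt ps = n - 1" "n \<ge> 2" shows "fw n (bw ps) = ps"
proof -
  note F = full_props[OF assms]
  show ?thesis
  proof (rule nth_equalityI)
    show "length (fw n (bw ps)) = length ps" using F(1) by (simp add: fw_def bw_def)
    fix t assume "t < length (fw n (bw ps))"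
    hence t: "t < length ps" using F(1) by (simp add: fw_def bw_def)
    have "fw n (bw ps) ! t = (if t < length ps - 1 then fst (ps!t) else n - 1,
                        if t = 0 then 1 else Suc (snd (ps!t) - 1))"
      using t F(1) unfolding fw_def bw_def by (auto simp del: upt_Suc simp: nth_append)
    also have "\<dots> = ps ! t"
    proof (cases "t < length ps - 1")
      case True
      then show ?thesis using t F(2) P_nth(1)[OF assms(1) t] by (cases "t = 0") (auto simp: prod_eq_iff)
    next
      case False
      hence "t = length ps - 1" using t by simp
      then show ?thesis using t F(2,3) P_nth(1)[OF assms(1) t] by (cases "t = 0") (auto simp: prod_eq_iff)
    qed
    finally show "fw n (bw ps) ! t = ps ! t" .
  qed
qed

lemma Zp_full: assumes "n \<ge> 1" shows "Zp n (n - 1) = card (P (n - 1))"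
proof (cases "n = 1")
  case True
  have "{ps \<in> P 1. wt ps = 0} = {[]}"
  proof -
    have "ps = []" if "ps \<in> P 1" for ps using P_len[OF that] by simp
    moreover have "[] \<in> P 1" unfolding P_def by simp
    ultimately show ?thesis by (auto simp: wt_Nil)
  qed
  thus ?thesis using True P0 unfolding Zp_def by simp
next
  case False
  hence n2: "n \<ge> 2" using assms by simp
  have "bij_betw bw {ps \<in> P n. wt ps = n - 1} (P (n - 1))"
  proof (rule bij_betw_byWitness[where f'="fw n"])
    show "\<forall>a\<in>{ps \<in> P n. wt ps = n - 1}. fw n (bw a) = a" using fw_bw n2 by blast
    show "\<forall>a'\<in>P (n - 1). bw (fw n a') = a'" using bw_fw by blast
    show "bw ` {ps \<in> P n. wt ps = n - 1} \<subseteq> P (n - 1)" using bw_in n2 by blast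
    show "fw n ` P (n - 1) \<subseteq> {ps \<in> P n. wt ps = n - 1}" using fw_in n2 by blast
  qed
  thus ?thesis unfolding Zp_def by (rule bij_betw_same_card)
qed




definition sh :: "nat \<Rightarrow> nat \<times> nat \<Rightarrow> nat \<times> nat" where
  "sh u p = (fst p + u, snd p + u)"
definition ush :: "nat \<Rightarrow> nat \<times> nat \<Rightarrow> nat \<times> nat" where
  "ush u p = (fst p - u, snd p - u)"
definition uu :: "nat \<Rightarrow> (nat \<times> nat) list \<Rightarrow> nat" where
  "uu n ps = Max ({1..n-1} - U ps)"

lemma U_append: "U (xs @ ys) = U xs \<union> U ys" unfolding U_def by auto

lemma U_sh: "U (map (sh u) r) = (\<lambda>x. x + u) ` U r"
  unfolding U_def sh_def by (simp add: image_UN)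

lemma glue_in: assumes "1 \<le> u" "u \<le> n - 1" "l \<in> P u" "r \<in> P (n - u)"
  shows "l @ map (sh u) r \<in> P n"
proof -
  have s1: "sorted_wrt lt2 (map (sh u) r)" unfolding sorted_wrt_map
    using P_memD(1)[OF assms(4)] by (rule sorted_wrt_mono_rel[rotated]) (auto simp: lt2_def sh_def)
  have "\<forall>x\<in>set l. \<forall>y\<in>set (map (sh u) r). lt2 x y"
  proof (intro ballI)
    fix x y assume x: "x \<in> set l" and y: "y \<in> set (map (sh u) r)"
    then obtain y' where y': "y' \<in> set r" "y = sh u y'" by auto
    show "lt2 x y" using P_memD(2)[OF assms(3) x] P_memD(2)[OF assms(4) y'(1)] y'(2) assms(1)
      by (auto simp: lt2_def sh_def)
  qed
  hence srt: "sorted_wrt lt2 (l @ map (sh u) r)" using P_memD(1)[OF assms(3)] s1 by (simp add: sorted_wrt_append)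
  have "\<forall>p\<in>set (l @ map (sh u) r). 1 \<le> snd p \<and> snd p \<le> fst p \<and> fst p \<le> n - 1"
  proof
    fix p assume "p \<in> set (l @ map (sh u) r)"
    then consider "p \<in> set l" | p' where "p' \<in> set r" "p = sh u p'" by auto
    thus "1 \<le> snd p \<and> snd p \<le> fst p \<and> fst p \<le> n - 1"
    proof cases
      case 1 thus ?thesis using P_memD(2)[OF assms(3)] assms(2) by fastforce
    next
      case 2 thus ?thesis using P_memD(2)[OF assms(4) 2(1)] assms(1,2) by (auto simp: sh_def)
    qed
  qed
  thus ?thesis unfolding P_def using srt by simp
qed

lemma glue_U: assumes "1 \<le> u" "u \<le> n - 1" "l \<in> P u" "r \<in> P (n - u)"
  shows "U (l @ map (sh u) r) = U l \<union> (\<lambda>x. x + u) ` U r"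
    "U l \<subseteq> {1..u-1}" "(\<lambda>x. x + u) ` U r \<subseteq> {u+1..n-1}"
proof -
  show "U (l @ map (sh u) r) = U l \<union> (\<lambda>x. x + u) ` U r" by (simp add: U_append U_sh)
  show "U l \<subseteq> {1..u-1}" by (rule U_sub[OF assms(3)])
  show "(\<lambda>x. x + u) ` U r \<subseteq> {u+1..n-1}"
  proof (rule image_subsetI)
    fix y assume "y \<in> U r"
    hence "1 \<le> y" "y \<le> n - u - 1" using U_sub[OF assms(4)] by auto
    thus "y + u \<in> {u+1..n-1}" using assms(1,2) by auto
  qed
qed

lemma glue_wt: assumes "1 \<le> u" "u \<le> n - 1" "l \<in> P u" "r \<in> P (n - u)"
  shows "wt (l @ map (sh u) r) = wt l + wt r"
proof -
  note G = glue_U[OF assms]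
  have d1: "\<forall>y\<in>U l. y < u" using G(2) assms(1) by fastforce
  have d2: "\<forall>y\<in>(\<lambda>x. x + u) ` U r. u < y" using G(3) by fastforce
  have d: "U l \<inter> (\<lambda>x. x + u) ` U r = {}" using d1 d2 by fastforce
  have "card ((\<lambda>x. x + u) ` U r) = card (U r)" by (rule card_image) (auto simp: inj_on_def)
  thus ?thesis unfolding wt_def G(1) using card_Un_disjoint[OF finite_U _ d] finite_U by simp
qed

lemma full_U: assumes "r \<in> P k" "wt r = k - 1" shows "U r = {1..k-1}"
  using card_subset_eq[OF _ U_sub[OF assms(1)]] assms(2) unfolding wt_def by simp

lemma glue_uu: assumes "1 \<le> u" "u \<le> n - 1" "l \<in> P u" "r \<in> P (n - u)" "wt r = n - u - 1"
  shows "uu n (l @ map (sh u) r) = u"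
proof -
  note G = glue_U[OF assms(1-4)]
  have "(\<lambda>x. x + u) ` U r = (\<lambda>x. x + u) ` {1..n-u-1}" using full_U[OF assms(4)] assms(5) by simp
  also have "\<dots> = {1 + u..n - u - 1 + u}" by (rule image_add_atLeastAtMost')
  also have "\<dots> = {u+1..n-1}"
  proof -
    have "n - u - 1 + u = n - 1" using assms(1,2) by arith
    thus ?thesis by simp
  qed
  finally have "(\<lambda>x. x + u) ` U r = {u+1..n-1}" .
  hence e: "U (l @ map (sh u) r) = U l \<union> {u+1..n-1}" using G(1) by simp
  have ul: "u \<notin> U l"
  proof
    assume "u \<in> U l"
    hence "u \<le> u - 1" using G(2) by (meson atLeastAtMost_iff subsetD)
    thus False using assms(1) by simp
  qed
  have mem: "u \<in> {1..n-1} - U (l @ map (sh u) r)" unfolding e using ul assms(1,2) by simp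
  have le: "\<And>x. x \<in> {1..n-1} - U (l @ map (sh u) r) \<Longrightarrow> x \<le> u"
  proof -
    fix x assume "x \<in> {1..n-1} - U (l @ map (sh u) r)"
    hence h: "x \<le> n - 1" "x \<notin> {u+1..n-1}" unfolding e by auto
    show "x \<le> u"
    proof (rule ccontr)
      assume "\<not> x \<le> u"
      hence "x \<in> {u+1..n-1}" using h(1) by simp
      thus False using h(2) by blast
    qed
  qed
  show ?thesis unfolding uu_def
    by (rule Max_eqI[OF finite_Diff[OF finite_atLeastAtMost] le mem])
qed

lemma glue_split: assumes "1 \<le> u" "u \<le> n - 1" "l \<in> P u" "r \<in> P (n - u)"
  shows "takeWhile (\<lambda>p. fst p < u) (l @ map (sh u) r) = l"
        "dropWhile (\<lambda>p. fst p < u) (l @ map (sh u) r) = map (sh u) r"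
proof -
  have a: "\<And>x. x \<in> set l \<Longrightarrow> fst x < u" using P_memD(2)[OF assms(3)] assms(1) by fastforce
  have b: "\<And>x. x \<in> set (map (sh u) r) \<Longrightarrow> \<not> fst x < u" by (auto simp: sh_def)
  show "takeWhile (\<lambda>p. fst p < u) (l @ map (sh u) r) = l"
  proof -
    have "takeWhile (\<lambda>p. fst p < u) (map (sh u) r) = []" by (cases r) (auto simp: sh_def)
    thus ?thesis using a by (simp add: takeWhile_append2)
  qed
  show "dropWhile (\<lambda>p. fst p < u) (l @ map (sh u) r) = map (sh u) r"
  proof -
    have "dropWhile (\<lambda>p. fst p < u) (map (sh u) r) = map (sh u) r" by (rule dropWhile_id) (auto simp: sh_def)
    thus ?thesis using a by (simp add: dropWhile_append2)
  qed
qed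

lemma dropWhile_ge: assumes "sorted_wrt lt2 ps" "p \<in> set (dropWhile (\<lambda>p. fst p < u) ps)"
  shows "u \<le> fst p"
proof -
  let ?d = "dropWhile (\<lambda>p. fst p < u) ps"
  have sd: "sorted_wrt lt2 ?d" using assms(1) by simp
  have ne: "?d \<noteq> []" by (metis assms(2) empty_iff empty_set)
  have h: "u \<le> fst (hd ?d)" using hd_dropWhile[OF ne] by simp
  obtain x xs where dx: "?d = x # xs" using ne by (cases ?d) auto
  have "p = x \<or> p \<in> set xs" using assms(2) dx by simp
  moreover have "p \<in> set xs \<Longrightarrow> lt2 x p" using sd dx by simp
  ultimately show ?thesis using h dx by (auto simp: lt2_def)
qed

lemma cut_props: assumes "ps \<in> P n" "1 \<le> u" "u \<le> n - 1" "u \<notin> U ps"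
  "\<And>x. u < x \<Longrightarrow> x \<le> n - 1 \<Longrightarrow> x \<in> U ps"
  shows "takeWhile (\<lambda>p. fst p < u) ps \<in> P u"
    "map (ush u) (dropWhile (\<lambda>p. fst p < u) ps) \<in> P (n - u)"
    "wt (map (ush u) (dropWhile (\<lambda>p. fst p < u) ps)) = n - u - 1"
    "takeWhile (\<lambda>p. fst p < u) ps @ map (sh u) (map (ush u) (dropWhile (\<lambda>p. fst p < u) ps)) = ps"
    "wt ps = wt (takeWhile (\<lambda>p. fst p < u) ps) + (n - u - 1)"
proof -
  let ?t = "takeWhile (\<lambda>p. fst p < u) ps"
  let ?d = "dropWhile (\<lambda>p. fst p < u) ps"
  let ?r = "map (ush u) ?d"
  have srt: "sorted_wrt lt2 ps" using P_memD(1)[OF assms(1)] .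
  have tw: "\<And>p. p \<in> set ?t \<Longrightarrow> fst p < u" by (auto dest: set_takeWhileD)
  have dset: "\<And>p. p \<in> set ?d \<Longrightarrow> p \<in> set ps" by (auto dest: set_dropWhileD)
  have dge: "\<And>p. p \<in> set ?d \<Longrightarrow> u < snd p"
  proof -
    fix p assume p: "p \<in> set ?d"
    have "u \<le> fst p" by (rule dropWhile_ge[OF srt p])
    moreover have "\<not> (snd p \<le> u \<and> u \<le> fst p)" using assms(4) dset[OF p] unfolding U_def by auto
    ultimately show "u < snd p" by simp
  qed
  have tset: "\<And>p. p \<in> set ?t \<Longrightarrow> p \<in> set ps" by (auto dest: set_takeWhileD)
  show tP: "?t \<in> P u" unfolding P_def
    using sorted_wrt_takeWhile[OF srt] P_memD(2)[OF assms(1) tset] tw by fastforce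
  have "\<forall>p\<in>set ?d. sh u (ush u p) = p"
  proof
    fix p assume p: "p \<in> set ?d"
    have "u < snd p" "u \<le> fst p" using dge[OF p] dropWhile_ge[OF srt p] by auto
    thus "sh u (ush u p) = p" by (cases p) (simp add: sh_def ush_def)
  qed
  hence shush: "map (sh u) ?r = ?d" unfolding map_map by (intro map_idI) auto
  show "?t @ map (sh u) ?r = ps" using shush by simp
  have sr: "sorted_wrt lt2 ?r" unfolding sorted_wrt_map
    using sorted_wrt_dropWhile[OF srt]
  proof (rule sorted_wrt_mono_rel[rotated])
    fix x y assume "x \<in> set ?d" "y \<in> set ?d" "lt2 x y"
    thus "lt2 (ush u x) (ush u y)" using dge[of x] dge[of y] dropWhile_ge[OF srt, of x u]
      by (auto simp: lt2_def ush_def)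
  qed
  show rP: "?r \<in> P (n - u)" unfolding P_def
    using sr P_memD(2)[OF assms(1) dset] dge by (fastforce simp: ush_def)
  have UU: "U ps = U ?t \<union> (\<lambda>x. x + u) ` U ?r"
    using glue_U(1)[OF assms(2,3) tP rP] \<open>?t @ map (sh u) ?r = ps\<close> by simp
  have "U ?r = {1..n-u-1}"
  proof
    show "U ?r \<subseteq> {1..n-u-1}" using U_sub[OF rP] by simp
    show "{1..n-u-1} \<subseteq> U ?r"
    proof
      fix x assume x: "x \<in> {1..n-u-1}"
      hence "x + u \<in> U ps" using assms(5)[of "x+u"] by auto
      moreover have "x + u \<notin> U ?t" using U_sub[OF tP] assms(2) by fastforce
      ultimately show "x \<in> U ?r" using UU by auto
    qed
  qed
  thus "wt ?r = n - u - 1" unfolding wt_def by simp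
  show "wt ps = wt ?t + (n - u - 1)"
    using glue_wt[OF assms(2,3) tP rP] \<open>?t @ map (sh u) ?r = ps\<close> \<open>wt ?r = n - u - 1\<close> by simp
qed

lemma uu_props: assumes "ps \<in> P n" "wt ps + 2 \<le> n"
  shows "1 \<le> uu n ps" "uu n ps \<le> n - 1" "uu n ps \<notin> U ps"
    "\<And>x. uu n ps < x \<Longrightarrow> x \<le> n - 1 \<Longrightarrow> x \<in> U ps"
proof -
  let ?S = "{1..n-1} - U ps"
  have "?S \<noteq> {}"
  proof
    assume "?S = {}"
    hence "{1..n-1} \<subseteq> U ps" by auto
    hence "card {1..n-1} \<le> card (U ps)" by (rule card_mono[OF finite_U])
    hence "n - 1 \<le> wt ps" unfolding wt_def by simp
    thus False using assms(2) by simp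
  qed
  have fS: "finite ?S" by simp
  have m: "uu n ps \<in> ?S" unfolding uu_def by (rule Max_in[OF fS \<open>?S \<noteq> {}\<close>])
  thus "1 \<le> uu n ps" "uu n ps \<le> n - 1" "uu n ps \<notin> U ps" by auto
  fix x assume x: "uu n ps < x" "x \<le> n - 1"
  show "x \<in> U ps"
  proof (rule ccontr)
    assume "x \<notin> U ps"
    hence "x \<in> ?S" using x by simp
    hence "x \<le> uu n ps" unfolding uu_def by (rule Max_ge[OF fS])
    thus False using x(1) by simp
  qed
qed

lemma decomp: assumes "m + 2 \<le> n"
  shows "Zp n m = (\<Sum>j = n - m - 1 .. n - 1. Zp j (m + j + 1 - n) * Zp (n - j) (n - j - 1))"
proof -
  define A where "A u = {l \<in> P u. wt l = m + u + 1 - n}" for u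
  define B where "B u = {r \<in> P (n - u). wt r = n - u - 1}" for u
  define S where "S = (SIGMA u:{n - m - 1 .. n - 1}. A u \<times> B u)"
  define Psi where "Psi x = (case x of (u, l, r) \<Rightarrow> l @ map (sh u) r)" for x
  define Phi where "Phi ps = (uu n ps, takeWhile (\<lambda>p. fst p < uu n ps) ps,
                      map (ush (uu n ps)) (dropWhile (\<lambda>p. fst p < uu n ps) ps))" for ps
  have fin: "\<And>u. finite (A u \<times> B u)" unfolding A_def B_def using finite_P by auto
  have cS: "card S = (\<Sum>j = n - m - 1 .. n - 1. Zp j (m + j + 1 - n) * Zp (n - j) (n - j - 1))"
    unfolding S_def using fin by (simp add: card_cartesian_product A_def B_def Zp_def)
  have "bij_betw Psi S {ps \<in> P n. wt ps = m}"
  proof (rule bij_betw_byWitness[where f'=Phi])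
    show "\<forall>a\<in>S. Phi (Psi a) = a"
    proof
      fix a assume "a \<in> S"
      then obtain u l r where a: "a = (u, l, r)" "u \<in> {n-m-1..n-1}" "l \<in> A u" "r \<in> B u"
        unfolding S_def by auto
      have u1: "1 \<le> u" "u \<le> n - 1" using a(2) assms by auto
      have lP: "l \<in> P u" and rP: "r \<in> P (n - u)" and rw: "wt r = n - u - 1" using a(3,4) unfolding A_def B_def by auto
      have "uu n (Psi a) = u" unfolding a Psi_def using glue_uu[OF u1 lP rP rw] by simp
      moreover have "map (ush u) (map (sh u) r) = r" by (simp add: map_idI sh_def ush_def)
      ultimately show "Phi (Psi a) = a" unfolding Phi_def using glue_split[OF u1 lP rP] a(1)
        by (simp add: Psi_def)
    qed
    show "\<forall>ps\<in>{ps \<in> P n. wt ps = m}. Psi (Phi ps) = ps"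
    proof
      fix ps assume ps: "ps \<in> {ps \<in> P n. wt ps = m}"
      hence h: "ps \<in> P n" "wt ps + 2 \<le> n" using assms by auto
      note U = uu_props[OF h]
      show "Psi (Phi ps) = ps" unfolding Phi_def Psi_def using cut_props(4)[OF h(1) U] by simp
    qed
    show "Psi ` S \<subseteq> {ps \<in> P n. wt ps = m}"
    proof
      fix x assume "x \<in> Psi ` S"
      then obtain u l r where a: "x = Psi (u, l, r)" "u \<in> {n-m-1..n-1}" "l \<in> A u" "r \<in> B u"
        unfolding S_def by auto
      have u1: "1 \<le> u" "u \<le> n - 1" using a(2) assms by auto
      have lP: "l \<in> P u" and rP: "r \<in> P (n - u)" and rw: "wt r = n - u - 1"
        and lw: "wt l = m + u + 1 - n" using a(3,4) unfolding A_def B_def by auto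
      have "wt x = m" using glue_wt[OF u1 lP rP] rw lw a(1) a(2) assms unfolding Psi_def by auto
      thus "x \<in> {ps \<in> P n. wt ps = m}" using glue_in[OF u1 lP rP] a(1) unfolding Psi_def by simp
    qed
    show "Phi ` {ps \<in> P n. wt ps = m} \<subseteq> S"
    proof
      fix x assume "x \<in> Phi ` {ps \<in> P n. wt ps = m}"
      then obtain ps where x: "x = Phi ps" "ps \<in> P n" "wt ps = m" by auto
      hence h: "ps \<in> P n" "wt ps + 2 \<le> n" using assms by auto
      note U = uu_props[OF h]
      note CP = cut_props[OF h(1) U]
      have "uu n ps \<in> {n - m - 1 .. n - 1}" using CP(5) x(3) U(1,2) by auto
      moreover have "wt (takeWhile (\<lambda>p. fst p < uu n ps) ps) = m + uu n ps + 1 - n"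
        using CP(5) x(3) U(1,2) by arith
      ultimately show "x \<in> S" unfolding S_def A_def B_def x(1) Phi_def using CP(1,2,3) by auto
    qed
  qed
  hence "card S = Zp n m" unfolding Zp_def by (rule bij_betw_same_card)
  thus ?thesis using cS by simp
qed




fun Dt :: "nat \<Rightarrow> nat \<Rightarrow> nat" where
  "Dt 0 m = (if m = 0 then 1 else 0)"
| "Dt (Suc n) 0 = 1"
| "Dt (Suc n) (Suc m) = (if Suc n \<le> Suc m then 0 else Dt n (Suc m) + Dt (Suc n) m)"

lemma Dt_zero: "n \<ge> 1 \<Longrightarrow> m \<ge> n \<Longrightarrow> Dt n m = 0"
  by (cases n; cases m) auto

lemma Dt_0: "Dt n 0 = 1" by (cases n) auto

lemma Dt_T: "n \<ge> 2 \<Longrightarrow> 1 \<le> m \<Longrightarrow> m \<le> n - 1 \<Longrightarrow> Dt n m = Dt (n - 1) m + Dt n (m - 1)"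
  by (cases n; cases m) auto

lemma Dt_tele: "k \<le> n \<Longrightarrow> Dt (Suc n) k = (\<Sum>m = 0..k. Dt n m)"
proof (induction k)
  case 0 thus ?case by (simp add: Dt_0)
next
  case (Suc k)
  thus ?case by simp
qed

definition R :: "nat \<Rightarrow> nat \<Rightarrow> nat" where
  "R N m = (\<Sum>d = 0..m. Dt (N - 1 - d) (m - d) * Dt (d + 1) d)"

lemma R_last: assumes "N \<ge> 1" shows "R N (N - 1) = Dt N (N - 1)"
proof -
  obtain K where K: "N = Suc K" using assms by (cases N) auto
  have "R N (N - 1) = (\<Sum>d = 0..K. Dt (K - d) (K - d) * Dt (d + 1) d)" unfolding R_def K by simp
  also have "\<dots> = (\<Sum>d \<in> {K}. Dt (K - d) (K - d) * Dt (d + 1) d)"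
    by (rule sum.mono_neutral_right) (auto simp: Dt_zero)
  also have "\<dots> = Dt N (N - 1)" using K by simp
  finally show ?thesis .
qed

lemma R_split: assumes "1 \<le> m" "m + 2 \<le> N"
  shows "R N m = R (N - 1) m + R N (m - 1)"
proof -
  obtain k where k: "m = Suc k" using assms by (cases m) auto
  have "R N m = (\<Sum>d = 0..k. Dt (N - 1 - d) (m - d) * Dt (d + 1) d) + Dt (N - 1 - m) 0 * Dt (m + 1) m"
    unfolding R_def k by simp
  also have "(\<Sum>d = 0..k. Dt (N - 1 - d) (m - d) * Dt (d + 1) d)
     = (\<Sum>d = 0..k. Dt (N - 2 - d) (m - d) * Dt (d + 1) d) + (\<Sum>d = 0..k. Dt (N - 1 - d) (k - d) * Dt (d + 1) d)"
  proof -
    have "Dt (N - 1 - d) (m - d) = Dt (N - 2 - d) (m - d) + Dt (N - 1 - d) (k - d)" if "d \<in> {0..k}" for d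
    proof -
      have "Dt (N - 1 - d) (m - d) = Dt (N - 1 - d - 1) (m - d) + Dt (N - 1 - d) (m - d - 1)"
        by (rule Dt_T) (use that assms k in auto)
      moreover have "N - 1 - d - 1 = N - 2 - d" "m - d - 1 = k - d" using k that by auto
      ultimately show ?thesis by simp
    qed
    thus ?thesis by (simp add: sum.distrib[symmetric] distrib_right)
  qed
  also have "R (N - 1) m = (\<Sum>d = 0..k. Dt (N - 2 - d) (m - d) * Dt (d + 1) d) + Dt (N - 2 - m) 0 * Dt (m + 1) m"
    unfolding R_def k by (simp add: numeral_2_eq_2)
  moreover have "R N (m - 1) = (\<Sum>d = 0..k. Dt (N - 1 - d) (k - d) * Dt (d + 1) d)"
    unfolding R_def k by simp
  ultimately show ?thesis by (simp add: Dt_0)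
qed

lemma Dt_R: "N \<ge> 1 \<Longrightarrow> m \<le> N - 1 \<Longrightarrow> Dt N m = R N m"
proof (induction "N + m" arbitrary: N m rule: less_induct)
  case less
  show ?case
  proof (cases "m = 0")
    case True thus ?thesis unfolding R_def by (simp add: Dt_0)
  next
    case m0: False
    show ?thesis
    proof (cases "m = N - 1")
      case True thus ?thesis using R_last[OF less.prems(1)] by simp
    next
      case False
      hence le: "m + 2 \<le> N" "1 \<le> m" using less.prems m0 by auto
      have "Dt N m = Dt (N - 1) m + Dt N (m - 1)" using Dt_T[of N m] le by simp
      also have "Dt N (m - 1) = R N (m - 1)" using less.hyps[of N "m - 1"] less.prems le by simp
      also have "Dt (N - 1) m = R (N - 1) m" using less.hyps[of "N - 1" m] le by simp
      finally show ?thesis using R_split[OF le(2) le(1)] by simp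
    qed
  qed
qed

lemma Dt_rec: assumes "m + 2 \<le> n"
  shows "Dt n m = (\<Sum>j = n - m - 1 .. n - 1. Dt j (m + j + 1 - n) * Dt (n - j) (n - j - 1))"
proof -
  have "Dt n m = R n m" using Dt_R[of n m] assms by simp
  also have "\<dots> = (\<Sum>j = n - m - 1 .. n - 1. Dt j (m + j + 1 - n) * Dt (n - j) (n - j - 1))"
    unfolding R_def
  proof (rule sum.reindex_bij_witness[where i="\<lambda>j. n - 1 - j" and j="\<lambda>d. n - 1 - d"])
    fix d assume "d \<in> {0..m}"
    thus "n - 1 - (n - 1 - d) = d" "n - 1 - d \<in> {n - m - 1..n - 1}" using assms by auto
    show "Dt (n - 1 - d) (m + (n - 1 - d) + 1 - n) * Dt (n - (n - 1 - d)) (n - (n - 1 - d) - 1)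
          = Dt (n - 1 - d) (m - d) * Dt (d + 1) d"
      using \<open>d \<in> {0..m}\<close> assms by (simp add: Suc_diff_le)
  next
    fix j assume "j \<in> {n - m - 1..n - 1}"
    thus "n - 1 - (n - 1 - j) = j" "n - 1 - j \<in> {0..m}" using assms by auto
  qed
  finally show ?thesis .
qed




lemma Zp_Dt: "Zp n m = Dt n m"
proof (induction n arbitrary: m rule: less_induct)
  case (less n)
  show ?case
  proof (cases "n = 0")
    case True thus ?thesis by (simp add: Zp0)
  next
    case n0: False
    consider "m \<ge> n" | "m = n - 1" | "m + 2 \<le> n" using n0 by linarith
    thus ?thesis
    proof cases
      case 1 thus ?thesis using n0 by (simp add: Zp_big Dt_zero)
    next
      case 2
      obtain K where K: "n = Suc K" using n0 by (cases n) auto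
      have "Zp n m = card (P K)" using Zp_full[of n] 2 K by simp
      also have "\<dots> = (\<Sum>j = 0..K. Zp K j)" by (rule card_P_sum)
      also have "\<dots> = (\<Sum>j = 0..K. Dt K j)" using less.IH[of K] K by simp
      also have "\<dots> = Dt n m" using Dt_tele[of K K] K 2 by simp
      finally show ?thesis .
    next
      case 3
      have "Zp n m = (\<Sum>j = n - m - 1 .. n - 1. Zp j (m + j + 1 - n) * Zp (n - j) (n - j - 1))"
        by (rule decomp[OF 3])
      also have "\<dots> = (\<Sum>j = n - m - 1 .. n - 1. Dt j (m + j + 1 - n) * Dt (n - j) (n - j - 1))"
      proof (rule sum.cong[OF refl])
        fix j assume "j \<in> {n - m - 1 .. n - 1}"
        hence "j < n" "n - j < n" using 3 by auto
        thus "Zp j (m + j + 1 - n) * Zp (n - j) (n - j - 1) = Dt j (m + j + 1 - n) * Dt (n - j) (n - j - 1)"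
          using less.IH by simp
      qed
      also have "\<dots> = Dt n m" using Dt_rec[OF 3] by simp
      finally show ?thesis .
    qed
  qed
qed

lemma Dt_closed: "1 \<le> m \<Longrightarrow> m \<le> Suc a \<Longrightarrow> Dt (Suc a) m + ((a + m) choose (m - 1)) = (a + m) choose m"
proof (induction a arbitrary: m)
  case 0
  hence "m = 1" by simp
  thus ?case by simp
next
  case (Suc a)
  note IHa = Suc.IH
  have m1: "1 \<le> m" and m2: "m \<le> Suc (Suc a)" using Suc.prems by auto
  from m1 m2 show ?case
  proof (induction m rule: nat_induct_at_least)
    case base
    have "Dt (Suc a) 1 + 1 = Suc a" using IHa[of 1] by simp
    moreover have "Dt (Suc (Suc a)) 1 = Dt (Suc a) 1 + 1" by (simp add: Dt_0)
    ultimately show ?case by simp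
  next
    case (Suc m)
    note IHm = Suc.IH
    show ?case
    proof (cases "Suc m = Suc (Suc a)")
      case True
      hence m: "m = Suc a" by simp
      have "Dt (Suc (Suc a)) (Suc m) = 0" using m by (simp add: Dt_zero)
      moreover have "(Suc a + Suc m) choose (Suc m - 1) = (Suc a + Suc m) choose Suc m"
        using m binomial_symmetric[of "Suc m" "Suc a + Suc m"] by simp
      ultimately show ?thesis by simp
    next
      case False
      hence le: "Suc m \<le> Suc a" using Suc.prems by simp
      have T: "Dt (Suc (Suc a)) (Suc m) = Dt (Suc a) (Suc m) + Dt (Suc (Suc a)) m"
        using le by simp
      have h1: "Dt (Suc a) (Suc m) + ((a + Suc m) choose m) = (a + Suc m) choose Suc m"
        using IHa[of "Suc m"] le by simp
      have h2: "Dt (Suc (Suc a)) m + ((Suc a + m) choose (m - 1)) = (Suc a + m) choose m"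
        using IHm le Suc.hyps by simp
      have p1: "(Suc a + Suc m) choose m = ((a + Suc m) choose (m - 1)) + ((a + Suc m) choose m)"
        using Suc.hyps by (cases m) auto
      have p2: "(Suc a + Suc m) choose Suc m = ((a + Suc m) choose m) + ((a + Suc m) choose Suc m)"
        by simp
      have e: "Suc a + m = a + Suc m" by simp
      show ?thesis using T h1 h2 p1 p2 unfolding e by simp
    qed
  qed
qed

lemma cat_key: assumes "k \<ge> 1"
  shows "k * ((2*k) choose k) = (k + 1) * ((2*k) choose (k - 1))"
proof -
  obtain j where j: "k = Suc j" using assms by (cases k) auto
  have "Suc j * ((2*k) choose Suc j) = 2*k * ((2*k - 1) choose j)" by (rule binomial_absorption)
  moreover have "(2*k - j) * ((2*k) choose j) = 2*k * ((2*k - 1) choose j)" by (rule binomial_absorb_comp)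
  moreover have "2*k - j = k + 1" using j by simp
  ultimately show ?thesis using j by simp
qed

lemma catalan_eq: assumes "k \<ge> 1"
  shows "catalan k + ((2*k) choose (k - 1)) = (2*k) choose k"
    "(k + 1) * catalan k = (2*k) choose k"
proof -
  define X where "X = (2*k) choose k"
  define Y where "Y = (2*k) choose (k - 1)"
  have kk: "k * X = (k + 1) * Y" using cat_key[OF assms] unfolding X_def Y_def .
  have YX: "Y \<le> X"
  proof -
    have "(k + 1) * Y \<le> (k + 1) * X" using kk by simp
    thus ?thesis using mult_le_cancel1[of "k+1" Y X] by simp
  qed
  have eq: "(k + 1) * (X - Y) = X"
  proof -
    have "(k + 1) * (X - Y) = (k + 1) * X - (k + 1) * Y" by (rule diff_mult_distrib2)
    also have "\<dots> = (k + 1) * X - k * X" using kk by simp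
    also have "\<dots> = X" by simp
    finally show ?thesis .
  qed
  have c: "catalan k = X - Y"
  proof -
    have "catalan k = X div (k + 1)" unfolding catalan_def X_def by simp
    also have "\<dots> = ((k + 1) * (X - Y)) div (k + 1)" using eq by simp
    also have "\<dots> = X - Y" by (rule nonzero_mult_div_cancel_left) simp
    finally show ?thesis .
  qed
  show "catalan k + ((2*k) choose (k - 1)) = (2*k) choose k" using c YX unfolding X_def Y_def by simp
  show "(k + 1) * catalan k = (2*k) choose k" using c eq unfolding X_def by simp
qed

lemma Dt_cat: assumes "n \<ge> 1" shows "Dt n (n - 1) = catalan (n - 1)"
proof (cases "n = 1")
  case True thus ?thesis by (simp add: catalan_def)
next
  case False
  then obtain k where k: "n = Suc k" "k \<ge> 1" using assms by (cases n) auto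
  have "Dt (Suc k) k + ((k + k) choose (k - 1)) = (k + k) choose k" using Dt_closed[of k "k"] k by simp
  moreover have "catalan k + ((2*k) choose (k - 1)) = (2*k) choose k" using catalan_eq[OF k(2)] by simp
  ultimately show ?thesis using k by (simp add: mult_2)
qed

definition Sw :: "nat \<Rightarrow> nat" where
  "Sw n = (\<Sum>m = 0..n - 1. 2 ^ (n - m) * Dt n m)"

lemma A_E: "(\<Sum>m = 0..k. 2 ^ (k - m) * Dt (Suc N) m) + Dt (Suc N) k = 2 * (\<Sum>j = 0..k. 2 ^ (k - j) * Dt N j)"
  if "k \<le> N" for k N
  using that
proof (induction k)
  case 0 thus ?case by (simp add: Dt_0)
next
  case (Suc k)
  have s1: "(\<Sum>m = 0..Suc k. 2 ^ (Suc k - m) * Dt (Suc N) m) = 2 * (\<Sum>m = 0..k. 2 ^ (k - m) * Dt (Suc N) m) + Dt (Suc N) (Suc k)"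
    by (simp add: sum_distrib_left Suc_diff_le mult.assoc)
  have s2: "(\<Sum>j = 0..Suc k. 2 ^ (Suc k - j) * Dt N j) = 2 * (\<Sum>j = 0..k. 2 ^ (k - j) * Dt N j) + Dt N (Suc k)"
    by (simp add: sum_distrib_left Suc_diff_le mult.assoc)
  have c: "Dt (Suc N) (Suc k) = Dt (Suc N) k + Dt N (Suc k)" using Dt_tele[of "Suc k" N] Dt_tele[of k N] Suc.prems by simp
  show ?case using Suc.IH Suc.prems s1 s2 c by simp
qed

lemma Sw_rec: assumes "N \<ge> 1" shows "Sw (Suc N) + 2 * Dt (Suc N) N = 4 * Sw N"
proof -
  have a: "Sw (Suc N) = 2 * (\<Sum>m = 0..N. 2 ^ (N - m) * Dt (Suc N) m)"
    unfolding Sw_def by (simp add: sum_distrib_left Suc_diff_le mult.assoc)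
  have "(\<Sum>j = 0..N. 2 ^ (N - j) * Dt N j) = Sw N"
  proof -
    obtain K where K: "N = Suc K" using assms by (cases N) auto
    have "(\<Sum>j = 0..N. 2 ^ (N - j) * Dt N j) = (\<Sum>j = 0..K. 2 ^ (N - j) * Dt N j) + 2 ^ 0 * Dt N N"
      unfolding K by simp
    thus ?thesis unfolding Sw_def using Dt_zero[of N N] assms K by simp
  qed
  thus ?thesis using a A_E[of N N] by simp
qed

lemma Sw_binom: "n \<ge> 1 \<Longrightarrow> Sw n = (2*n) choose n"
proof (induction n rule: nat_induct_at_least)
  case base thus ?case by (simp add: Sw_def)
next
  case (Suc N)
  define X where "X = (2*N) choose N"
  define Y where "Y = (2*N) choose (N - 1)"
  have d: "Dt (Suc N) N + Y = X" using Dt_closed[of N N] Suc.hyps unfolding X_def Y_def by (simp add: mult_2)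
  have r: "Sw (Suc N) + 2 * Dt (Suc N) N = 4 * X" using Sw_rec[OF Suc.hyps] Suc.IH unfolding X_def by simp
  have b: "(2 * Suc N) choose Suc N = 2 * (X + Y)"
  proof -
    obtain j where j: "N = Suc j" using Suc.hyps by (cases N) auto
    have "(2 * Suc N) choose Suc N = (Suc (2*N) choose N) + (Suc (2*N) choose Suc N)" by simp
    also have "Suc (2*N) choose Suc N = Suc (2*N) choose N"
      using binomial_symmetric[of "Suc N" "Suc (2*N)"] by simp
    also have "Suc (2*N) choose N = X + Y" unfolding X_def Y_def j by simp
    finally show ?thesis by simp
  qed
  show ?case using d r b by simp
qed



theorem mainTheorem18:
  fixes n :: nat
  assumes "n \<ge> 1"
  shows "(\<forall>m. m + 2 \<le> n \<longrightarrow>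
            Z n m = (\<Sum>j = n - m - 1 .. n - 1. Z j (m + j + 1 - n) * Z (n - j) (n - j - 1)))
       \<and> Z n (n - 1) = catalan (n - 1)
       \<and> (\<Sum>m = 0 .. n - 1. 2 ^ (n - m) * Z n m) = (n + 1) * catalan n"
proof (intro conjI allI impI)
  fix m assume "m + 2 \<le> n"
  thus "Z n m = (\<Sum>j = n - m - 1 .. n - 1. Z j (m + j + 1 - n) * Z (n - j) (n - j - 1))"
    unfolding Z_Zp by (rule decomp)
next
  show "Z n (n - 1) = catalan (n - 1)" unfolding Z_Zp Zp_Dt using Dt_cat[OF assms] .
next
  have "(\<Sum>m = 0 .. n - 1. 2 ^ (n - m) * Z n m) = Sw n" unfolding Sw_def Z_Zp Zp_Dt ..
  also have "\<dots> = (2*n) choose n" by (rule Sw_binom[OF assms])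
  also have "\<dots> = (n + 1) * catalan n" using catalan_eq(2)[OF assms] by simp
  finally show "(\<Sum>m = 0 .. n - 1. 2 ^ (n - m) * Z n m) = (n + 1) * catalan n" .
qed

end
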